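(* (1) For $n\ge1$, the primary theta-seed $\Delta_1(\boldsymbol{\theta}_n)$ lies in $T_n$. (2) For $n\ge 3$, the secondary theta-seed $\Delta_2(\boldsymbol{\theta}_n)$ lies in $T_n$.
   Context: Let $\mathbb{Q}[\boldsymbol{\theta}_n,\boldsymbol{\xi}_n,\boldsymbol{\rho}_n]$ be the $\mathbb{Q}$-algebra generated by $3n$ pairwise anticommuting variables $\theta_i,\xi_i,\rho_i$ ($1\le i\le n$), with $\mathfrak{S}_n$ acting by permuting indices simultaneously in all three sets. For any of these variables $\alpha_j$, the derivative is defined on monomials by $\partial_{\alpha_j}(\alpha_{i_1}\cdots\alpha_{i_k}) = (-1)^{\ell-1}\alpha_{i_1}\cdots\widehat{\alpha_{i_\ell}}\cdots\alpha_{i_k}$ if the variable $\alpha_j$ equals the $\ell$-th factor, and $0$ if it does not occur, extended linearly. The space of triagonal fermionic harmonics is $T_n:=\{f : \sum_{i=1}^n\partial_{\theta_i}^h\partial_{\xi_i}^k\partial_{\rho_i}^\ell f=0 \text{ for all } h,k,\ell\ge0,\ h+k+\ell>0\}$. Define $\Delta_1(\boldsymbol{\theta}_n):=\sum_{\sigma\in\mathfrak{S}_n}\mathrm{sgn}(\sigma)\sigma(\theta_1\theta_2\cdots\theta_{n-1})$ and, for $n\ge3$, $\Delta_2(\boldsymbol{\theta}_n):=\sum_{\sigma\in\mathfrak{S}_n}\mathrm{sgn}(\sigma)\sigma\bigl((\theta_1\xi_2\rho_2+\theta_2\xi_1\rho_2+\theta_2\xi_2\rho_1)\theta_3\theta_4\cdots\theta_{n-1}\bigr)$,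 where empty products of $\theta$'s are $1$. *)

theory Defs
  imports Complex_Main "HOL-Combinatorics.Permutations" "HOL-Library.Product_Lexorder"
begin

text \<open>Exterior (Grassmann) algebra over the rationals on generators of type nat \<times> nat.
  An element is represented by its coefficient function: f S is the coefficient of the
  monomial given by the product of the generators in the finite set S, taken in
  increasing (lexicographic) order.\<close>

type_synonym gen = "nat \<times> nat"
type_synonym ext = "gen set \<Rightarrow> rat"

definition th :: "nat \<Rightarrow> gen" where "th i = (0, i)"
definition xi :: "nat \<Rightarrow> gen" where "xi i = (1, i)"
definition rh :: "nat \<Rightarrow> gen" where "rh i = (2, i)"

definition gens :: "nat \<Rightarrow> gen set" where
  "gens n = {th i | i. i \<in> {1..n}} \<union> {xi i | i. i \<in> {1..n}} \<union> {rh i | i. i \<in> {1..n}}"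

definition ezero :: ext where "ezero = (\<lambda>S. 0)"
definition eone :: ext where "eone = (\<lambda>S. if S = {} then 1 else 0)"
definition evar :: "gen \<Rightarrow> ext" where "evar a = (\<lambda>S. if S = {a} then 1 else 0)"
definition eadd :: "ext \<Rightarrow> ext \<Rightarrow> ext" where "eadd f g = (\<lambda>S. f S + g S)"
definition esmult :: "rat \<Rightarrow> ext \<Rightarrow> ext" where "esmult c f = (\<lambda>S. c * f S)"
definition esum :: "('a \<Rightarrow> ext) \<Rightarrow> 'a set \<Rightarrow> ext" where
  "esum F A = (\<lambda>S. \<Sum>x\<in>A. F x S)"

text \<open>Sign of merging the sorted monomials A and B: (-1)^(number of inversions).\<close>
definition msign :: "gen set \<Rightarrow> gen set \<Rightarrow> rat" where
  "msign A B = (-1) ^ card {(a, b). a \<in> A \<and> b \<in> B \<and> b < a}"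

definition emul :: "ext \<Rightarrow> ext \<Rightarrow> ext" where
  "emul f g = (\<lambda>S. \<Sum>A\<in>Pow S. msign A (S - A) * f A * g (S - A))"

definition eprod :: "ext list \<Rightarrow> ext" where
  "eprod xs = foldr emul xs eone"

text \<open>Derivative: on the sorted monomial of S \<union> {a} (a \<notin> S), a sits at position
  l = 1 + #{s \<in> S. s < a}, and the derivative yields sign (-1)^(l-1).\<close>
definition ederiv :: "gen \<Rightarrow> ext \<Rightarrow> ext" where
  "ederiv a f = (\<lambda>T. if a \<in> T then 0 else (-1) ^ card {t \<in> T. t < a} * f (insert a T))"

definition in_alg :: "nat \<Rightarrow> ext \<Rightarrow> bool" where
  "in_alg n f \<longleftrightarrow> (\<forall>S. f S \<noteq> 0 \<longrightarrow> S \<subseteq> gens n)"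

definition triag_harm :: "nat \<Rightarrow> ext set" where
  "triag_harm n = {f. in_alg n f \<and>
     (\<forall>h k l. h + k + l > 0 \<longrightarrow>
        esum (\<lambda>i. (ederiv (th i) ^^ h) ((ederiv (xi i) ^^ k) ((ederiv (rh i) ^^ l) f))) {1..n}
        = ezero)}"

definition Delta1 :: "nat \<Rightarrow> ext" where
  "Delta1 n = esum (\<lambda>\<sigma>. esmult (of_int (sign \<sigma>))
       (eprod (map (\<lambda>i. evar (th (\<sigma> i))) [1..<n])))
     {\<sigma>. \<sigma> permutes {1..n}}"

definition Delta2 :: "nat \<Rightarrow> ext" where
  "Delta2 n = esum (\<lambda>\<sigma>. esmult (of_int (sign \<sigma>))
       (emul
         (eadd (eadd (eprod [evar (th (\<sigma> 1)), evar (xi (\<sigma> 2)), evar (rh (\<sigma> 2))])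
                     (eprod [evar (th (\<sigma> 2)), evar (xi (\<sigma> 1)), evar (rh (\<sigma> 2))]))
                     (eprod [evar (th (\<sigma> 2)), evar (xi (\<sigma> 2)), evar (rh (\<sigma> 1))]))
         (eprod (map (\<lambda>i. evar (th (\<sigma> i))) [3..<n]))))
     {\<sigma>. \<sigma> permutes {1..n}}"

end

theory Submission
  imports Defs
begin

definition P :: "gen list \<Rightarrow> ext" where "P u = eprod (map evar u)"

lemma P_Nil: "P [] = eone" by (simp add: P_def eprod_def)
lemma P_Cons: "P (a # u) = emul (evar a) (P u)" by (simp add: P_def eprod_def)

lemma emul_infinite: "infinite S \<Longrightarrow> emul f g S = 0"
  by (simp add: emul_def)

lemma msign_single: "finite S \<Longrightarrow> msign {a} (S - {a}) = (-1) ^ card {s\<in>S. s < a}"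
proof -
  assume fS: "finite S"
  have "{(x, b). x \<in> {a} \<and> b \<in> S - {a} \<and> b < x} = Pair a ` {s\<in>S. s < a}" by auto
  moreover have "card (Pair a ` {s\<in>S. s < a}) = card {s\<in>S. s < a}"
    by (rule card_image) (simp add: inj_on_def)
  ultimately show ?thesis by (simp add: msign_def)
qed

lemma emul_evar: "finite S \<Longrightarrow> emul (evar a) f S =
   (if a \<in> S then (-1) ^ card {s\<in>S. s < a} * f (S - {a}) else 0)"
proof -
  assume fS: "finite S"
  have "emul (evar a) f S = (\<Sum>A\<in>Pow S. if A = {a} then msign {a} (S - {a}) * f (S - {a}) else 0)"
    unfolding emul_def evar_def by (rule sum.cong) auto
  also have "\<dots> = (if a \<in> S then msign {a} (S - {a}) * f (S - {a}) else 0)"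
    using fS by (simp add: sum.delta')
  finally show ?thesis using msign_single[OF fS] by simp
qed

lemma emul_eone: "(\<And>S. infinite S \<Longrightarrow> g S = 0) \<Longrightarrow> emul eone g = g"
proof
  fix S assume g: "\<And>S. infinite S \<Longrightarrow> g S = 0"
  show "emul eone g S = g S"
  proof (cases "finite S")
    case True
    have "emul eone g S = (\<Sum>A\<in>Pow S. if A = {} then msign {} S * g S else 0)"
      unfolding emul_def eone_def by (rule sum.cong) auto
    also have "\<dots> = msign {} S * g S" using True by (simp add: sum.delta')
    finally show ?thesis by (simp add: msign_def)
  qed (simp add: emul_infinite g)
qed

lemma P_infinite: "infinite S \<Longrightarrow> P u S = 0"
  by (cases u) (auto simp: P_Nil P_Cons eone_def emul_infinite)

lemma P_supp: "P u S \<noteq> 0 \<Longrightarrow> S = set u"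
proof (induction u arbitrary: S)
  case Nil then show ?case by (simp add: P_Nil eone_def split: if_splits)
next
  case (Cons a u)
  then have fS: "finite S" using emul_infinite by (force simp: P_Cons)
  with Cons.prems have "a \<in> S" "P u (S - {a}) \<noteq> 0" by (auto simp: P_Cons emul_evar[OF fS] split: if_splits)
  with Cons.IH show ?case by auto
qed

lemma card_lt_insert: "finite T \<Longrightarrow> a \<notin> T \<Longrightarrow>
  (-1::rat) ^ card {s\<in>insert a T. s < b} = (if a < b then -1 else 1) * (-1) ^ card {s\<in>T. s < b}"
proof -
  assume f: "finite T" and a: "a \<notin> T"
  show ?thesis
  proof (cases "a < b")
    case True
    then have "{s\<in>insert a T. s < b} = insert a {s\<in>T. s < b}" by auto
    then show ?thesis using f a True by simp
  next
    case False
    then have "{s\<in>insert a T. s < b} = {s\<in>T. s < b}" by auto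
    then show ?thesis using False by simp
  qed
qed

lemma card_lt_remove: "finite T \<Longrightarrow> b \<in> T \<Longrightarrow>
  (-1::rat) ^ card {s\<in>T. s < a} = (if b < a then -1 else 1) * (-1) ^ card {s\<in>T - {b}. s < a}"
proof -
  assume f: "finite T" and b: "b \<in> T"
  have "T = insert b (T - {b})" using b by auto
  then have "(-1::rat) ^ card {s\<in>T. s < a} = (-1::rat) ^ card {s\<in>insert b (T - {b}). s < a}" by simp
  also have "\<dots> = (if b < a then -1 else 1) * (-1) ^ card {s\<in>T - {b}. s < a}"
    by (rule card_lt_insert) (use f in auto)
  finally show ?thesis .
qed

lemma msign_insert: "finite B \<Longrightarrow> finite C \<Longrightarrow> a \<notin> B \<Longrightarrow>
   msign (insert a B) C = (-1) ^ card {y\<in>C. y < a} * msign B C"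
proof -
  assume fB: "finite B" and fC: "finite C" and aB: "a \<notin> B"
  have eq: "{(x, y). x \<in> insert a B \<and> y \<in> C \<and> y < x} =
     Pair a ` {y\<in>C. y < a} \<union> {(x, y). x \<in> B \<and> y \<in> C \<and> y < x}" by auto
  have fin2: "finite {(x, y). x \<in> B \<and> y \<in> C \<and> y < x}"
    by (rule finite_subset[of _ "B \<times> C"]) (use fB fC in auto)
  have disj: "Pair a ` {y\<in>C. y < a} \<inter> {(x, y). x \<in> B \<and> y \<in> C \<and> y < x} = {}" using aB by auto
  have c1: "card (Pair a ` {y\<in>C. y < a}) = card {y\<in>C. y < a}"
    by (rule card_image) (simp add: inj_on_def)
  have "card {(x, y). x \<in> insert a B \<and> y \<in> C \<and> y < x} =
      card {y\<in>C. y < a} + card {(x, y). x \<in> B \<and> y \<in> C \<and> y < x}"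
    unfolding eq by (subst card_Un_disjoint) (use fC fin2 disj c1 in auto)
  then show ?thesis by (simp add: msign_def power_add)
qed

lemma card_split_lt: "finite S \<Longrightarrow> B \<subseteq> S \<Longrightarrow>
  card {y\<in>S - B. y < a} + card {s\<in>B. s < a} = card {s\<in>S. s < a}"
proof -
  assume f: "finite S" and B: "B \<subseteq> S"
  have "{s\<in>S. s < a} = {y\<in>S - B. y < a} \<union> {s\<in>B. s < a}" using B by auto
  moreover have "card ({y\<in>S - B. y < a} \<union> {s\<in>B. s < a}) = card {y\<in>S - B. y < a} + card {s\<in>B. s < a}"
    using f B by (intro card_Un_disjoint) (auto intro: rev_finite_subset)
  ultimately show ?thesis by simp
qed

lemma rearr: "(x::rat) * y = z \<Longrightarrow> (x * m) * (y * f) * g = z * (m * f * g)"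
proof -
  assume h: "x * y = z"
  have "(x * m) * (y * f) * g = (x * y) * (m * f * g)" by (simp add: mult_ac)
  then show ?thesis by (simp add: h)
qed

lemma emul_assoc_evar: "emul (emul (evar a) f) g = emul (evar a) (emul f g)"
proof
  fix S
  show "emul (emul (evar a) f) g S = emul (evar a) (emul f g) S"
  proof (cases "finite S")
    case False then show ?thesis by (simp add: emul_infinite)
  next
    case fS: True
    have sub: "A \<in> Pow S \<Longrightarrow> finite A" for A using fS finite_subset by auto
    have L: "emul (emul (evar a) f) g S = (\<Sum>A\<in>Pow S. if a \<in> A then msign A (S - A) *
         ((-1) ^ card {s\<in>A. s < a} * f (A - {a})) * g (S - A) else 0)"
      unfolding emul_def[of "emul (evar a) f"]
    proof (rule sum.cong)
      fix A assume "A \<in> Pow S"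
      then have "finite A" by (rule sub)
      then show "msign A (S - A) * emul (evar a) f A * g (S - A) = (if a \<in> A then msign A (S - A) *
         ((-1) ^ card {s\<in>A. s < a} * f (A - {a})) * g (S - A) else 0)"
        by (simp only: emul_evar) simp
    qed simp
    show ?thesis
    proof (cases "a \<in> S")
      case False
      then have "emul (emul (evar a) f) g S = 0" unfolding L by (intro sum.neutral) auto
      then show ?thesis using False by (simp add: emul_evar fS)
    next
      case aS: True
      have "emul (emul (evar a) f) g S = (\<Sum>A\<in>{A\<in>Pow S. a \<in> A}. msign A (S - A) *
         ((-1) ^ card {s\<in>A. s < a} * f (A - {a})) * g (S - A))"
        unfolding L using fS by (simp only: sum.inter_filter finite_Pow_iff)
      also have "{A\<in>Pow S. a \<in> A} = insert a ` Pow (S - {a})"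
      proof
        show "{A\<in>Pow S. a \<in> A} \<subseteq> insert a ` Pow (S - {a})"
        proof
          fix A assume "A \<in> {A\<in>Pow S. a \<in> A}"
          then have "A = insert a (A - {a})" "A - {a} \<in> Pow (S - {a})" by auto
          then show "A \<in> insert a ` Pow (S - {a})" by (metis imageI)
        qed
      qed (use aS in auto)
      also have "(\<Sum>A\<in>insert a ` Pow (S - {a}). msign A (S - A) *
         ((-1) ^ card {s\<in>A. s < a} * f (A - {a})) * g (S - A)) =
         (\<Sum>B\<in>Pow (S - {a}). msign (insert a B) (S - insert a B) *
         ((-1) ^ card {s\<in>insert a B. s < a} * f (insert a B - {a})) * g (S - insert a B))"
        by (subst sum.reindex) (auto simp: inj_on_def)
      also have "\<dots> = (\<Sum>B\<in>Pow (S - {a}). (-1) ^ card {s\<in>S. s < a} * (msign B (S - {a} - B) * f B * g (S - {a} - B)))"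
      proof (rule sum.cong)
        fix B assume B: "B \<in> Pow (S - {a})"
        then have aB: "a \<notin> B" and BS: "B \<subseteq> S - {a}" by auto
        have fB: "finite B" using BS fS by (auto intro: rev_finite_subset)
        have e1: "S - insert a B = S - {a} - B" by auto
        have e2: "insert a B - {a} = B" using aB by auto
        have e3: "{s\<in>insert a B. s < a} = {s\<in>B. s < a}" by auto
        have ms: "msign (insert a B) (S - {a} - B) = (-1) ^ card {y\<in>S - {a} - B. y < a} * msign B (S - {a} - B)"
          by (rule msign_insert) (use fB fS aB in auto)
        have cs: "card {y\<in>S - {a} - B. y < a} + card {s\<in>B. s < a} = card {s\<in>S - {a}. s < a}"
          by (rule card_split_lt) (use fS BS in auto)
        have e4: "{s\<in>S - {a}. s < a} = {s\<in>S. s < a}" by auto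
        have "(-1::rat) ^ card {y\<in>S - {a} - B. y < a} * (-1) ^ card {s\<in>B. s < a} = (-1) ^ (card {y\<in>S - {a} - B. y < a} + card {s\<in>B. s < a})"
          by (simp only: power_add)
        also have "card {y\<in>S - {a} - B. y < a} + card {s\<in>B. s < a} = card {s\<in>S. s < a}"
          using cs e4 by simp
        finally have pw: "(-1::rat) ^ card {y\<in>S - {a} - B. y < a} * (-1) ^ card {s\<in>B. s < a} = (-1) ^ card {s\<in>S. s < a}" .
        show "msign (insert a B) (S - insert a B) *
         ((-1) ^ card {s\<in>insert a B. s < a} * f (insert a B - {a})) * g (S - insert a B) =
          (-1) ^ card {s\<in>S. s < a} * (msign B (S - {a} - B) * f B * g (S - {a} - B))"
          unfolding e1 e2 e3 ms by (rule rearr[OF pw])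
      qed simp
      also have "\<dots> = (-1) ^ card {s\<in>S. s < a} * emul f g (S - {a})"
        by (simp add: emul_def sum_distrib_left)
      finally show ?thesis using aS by (simp add: emul_evar fS)
    qed
  qed
qed

definition fins :: "ext \<Rightarrow> bool" where "fins f \<longleftrightarrow> (\<forall>S. infinite S \<longrightarrow> f S = 0)"

lemma fins_P: "fins (P u)" by (simp add: fins_def P_infinite)

lemma leibniz:
  assumes f: "fins f"
  shows "ederiv a (emul (evar b) f) T =
     (if a = b then f T else 0) - emul (evar b) (ederiv a f) T"
proof (cases "finite T")
  case False
  then show ?thesis using f by (simp add: ederiv_def emul_infinite fins_def)
next
  case fT: True
  have fI: "finite (insert a T)" using fT by simp
  show ?thesis
  proof (cases "a = b")
    case True
    show ?thesis
    proof (cases "a \<in> T")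
      case aT: True
      have "{t\<in>T - {a}. t < a} = {t\<in>T. t < a}" by auto
      then show ?thesis using aT True fT
        by (simp add: ederiv_def emul_evar insert_absorb)
    next
      case aT: False
      have "{s\<in>insert a T. s < a} = {t\<in>T. t < a}" by auto
      then show ?thesis using aT True fT
        by (simp add: ederiv_def emul_evar)
    qed
  next
    case ab: False
    show ?thesis
    proof (cases "a \<in> T")
      case True
      then show ?thesis using ab fT by (simp add: ederiv_def emul_evar)
    next
      case aT: False
      show ?thesis
      proof (cases "b \<in> T")
        case False
        then show ?thesis using ab fT aT by (simp add: ederiv_def emul_evar)
      next
        case bT: True
        have e: "insert a T - {b} = insert a (T - {b})" using ab by auto
        have c1: "(-1::rat) ^ card {s\<in>insert a T. s < b} = (if a < b then -1 else 1) * (-1) ^ card {s\<in>T. s < b}"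
          by (rule card_lt_insert) (use fT aT in auto)
        have c2: "(-1::rat) ^ card {s\<in>T. s < a} = (if b < a then -1 else 1) * (-1) ^ card {s\<in>T - {b}. s < a}"
          by (rule card_lt_remove) (use fT bT in auto)
        have o: "a < b \<or> b < a" using ab by (meson neqE)
        have L: "ederiv a (emul (evar b) f) T = (-1) ^ card {s\<in>T. s < a} *
            ((-1) ^ card {s\<in>insert a T. s < b} * f (insert a (T - {b})))"
          using aT bT fT e by (simp add: ederiv_def emul_evar)
        have R: "emul (evar b) (ederiv a f) T = (-1) ^ card {s\<in>T. s < b} *
            ((-1) ^ card {s\<in>T - {b}. s < a} * f (insert a (T - {b})))"
          using aT bT fT by (simp add: ederiv_def emul_evar)
        show ?thesis unfolding L R c1 c2 using ab o by auto
      qed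
    qed
  qed
qed

fun rm :: "gen \<Rightarrow> gen list \<Rightarrow> rat \<times> gen list" where
  "rm a [] = (0, [])"
| "rm a (b # u) = (if a = b then (1, u) else (- fst (rm a u), b # snd (rm a u)))"

lemma rm_notin: "a \<notin> set u \<Longrightarrow> rm a u = (0, u)"
  by (induction u) auto

lemma snd_rm: "snd (rm a u) = remove1 a u"
  by (induction u) auto

lemma emul_smult: "emul f (\<lambda>S. c * g S) = (\<lambda>S. c * emul f g S)"
  by (simp add: emul_def sum_distrib_left algebra_simps)

lemma ederiv_P: "distinct u \<Longrightarrow> ederiv a (P u) = (\<lambda>S. fst (rm a u) * P (snd (rm a u)) S)"
proof (induction u)
  case Nil
  show ?case by (auto simp: P_Nil ederiv_def eone_def)
next
  case (Cons b u)
  then have IH: "ederiv a (P u) = (\<lambda>S. fst (rm a u) * P (snd (rm a u)) S)" and bu: "b \<notin> set u" by auto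
  show ?case
  proof (rule ext)
    fix T
    have "ederiv a (P (b # u)) T = (if a = b then P u T else 0) - emul (evar b) (ederiv a (P u)) T"
      unfolding P_Cons by (rule leibniz[OF fins_P])
    also have "\<dots> = fst (rm a (b # u)) * P (snd (rm a (b # u))) T"
    proof (cases "a = b")
      case True
      then show ?thesis using bu IH by (simp add: rm_notin emul_def)
    next
      case False
      then show ?thesis using IH by (simp add: emul_smult P_Cons)
    qed
    finally show "ederiv a (P (b # u)) T = fst (rm a (b # u)) * P (snd (rm a (b # u))) T" .
  qed
qed

lemma ederiv_twice: "ederiv a (ederiv a f) = (\<lambda>_. 0)"
  by (rule ext) (simp add: ederiv_def)

lemma ederiv_zero: "ederiv a (\<lambda>_. 0) = (\<lambda>_. 0)"
  by (rule ext) (simp add: ederiv_def)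

lemma ederiv_pow_zero: "(ederiv a ^^ m) (\<lambda>_. 0) = (\<lambda>_. 0)"
  by (induction m) (auto simp: ederiv_zero)

lemma ederiv_pow_ge2: "h \<ge> 2 \<Longrightarrow> (ederiv a ^^ h) f = (\<lambda>_. 0)"
proof -
  assume "h \<ge> 2"
  then obtain m where "h = m + 2" by (metis add.commute le_add_diff_inverse)
  then have "(ederiv a ^^ h) f = (ederiv a ^^ m) ((ederiv a ^^ 2) f)" by (simp only: funpow_add o_apply)
  also have "(ederiv a ^^ 2) f = (\<lambda>_. 0)" by (simp add: numeral_2_eq_2 ederiv_twice)
  finally show ?thesis by (simp add: ederiv_pow_zero)
qed

lemma ederiv_lin: "ederiv a (\<lambda>S. \<Sum>x\<in>A. c x * F x S) = (\<lambda>S. \<Sum>x\<in>A. c x * ederiv a (F x) S)"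
  by (rule ext) (simp add: ederiv_def sum_distrib_right mult_ac)

lemma ederiv_pow_lin: "(ederiv a ^^ h) (\<lambda>S. \<Sum>x\<in>A. c x * F x S) = (\<lambda>S. \<Sum>x\<in>A. c x * (ederiv a ^^ h) (F x) S)"
  by (induction h) (simp_all add: ederiv_lin)

lemma ederiv_add: "ederiv a (\<lambda>S. f S + g S) = (\<lambda>S. ederiv a f S + ederiv a g S)"
  by (rule ext) (simp add: ederiv_def algebra_simps)

lemma ederiv_pow_add: "(ederiv a ^^ h) (\<lambda>S. f S + g S) = (\<lambda>S. (ederiv a ^^ h) f S + (ederiv a ^^ h) g S)"
  by (induction h) (simp_all add: ederiv_add)

definition gact :: "(nat \<Rightarrow> nat) \<Rightarrow> gen \<Rightarrow> gen" where "gact \<sigma> p = (fst p, \<sigma> (snd p))"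
definition act :: "(nat \<Rightarrow> nat) \<Rightarrow> gen list \<Rightarrow> gen list" where "act \<sigma> u = map (gact \<sigma>) u"
definition PP :: "rat \<times> gen list \<Rightarrow> ext" where "PP cu = (\<lambda>S. fst cu * P (snd cu) S)"
definition st :: "gen \<Rightarrow> rat \<times> gen list \<Rightarrow> rat \<times> gen list" where
  "st a cu = (fst cu * fst (rm a (snd cu)), snd (rm a (snd cu)))"
definition Dop :: "nat \<Rightarrow> nat \<Rightarrow> nat \<Rightarrow> nat \<Rightarrow> ext \<Rightarrow> ext" where
  "Dop h k l j f = (ederiv (th j) ^^ h) ((ederiv (xi j) ^^ k) ((ederiv (rh j) ^^ l) f))"
definition Dw :: "nat \<Rightarrow> nat \<Rightarrow> nat \<Rightarrow> nat \<Rightarrow> rat \<times> gen list \<Rightarrow> rat \<times> gen list" where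
  "Dw h k l j cu = (st (th j) ^^ h) ((st (xi j) ^^ k) ((st (rh j) ^^ l) cu))"
definition Alt :: "nat \<Rightarrow> gen list \<Rightarrow> ext" where
  "Alt n u = (\<lambda>S. \<Sum>\<sigma>\<in>{\<sigma>. \<sigma> permutes {1..n}}. of_int (sign \<sigma>) * P (act \<sigma> u) S)"

lemma ederiv_PP: "distinct (snd cu) \<Longrightarrow> ederiv a (PP cu) = PP (st a cu)"
proof -
  assume d: "distinct (snd cu)"
  have "ederiv a (PP cu) = (\<lambda>S. fst cu * ederiv a (P (snd cu)) S)"
    by (rule ext) (simp add: PP_def ederiv_def mult_ac)
  then show ?thesis using ederiv_P[OF d, of a] by (simp add: PP_def st_def mult_ac)
qed

lemma distinct_st: "distinct (snd cu) \<Longrightarrow> distinct (snd (st a cu))"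
  by (simp add: st_def snd_rm)

lemma ederiv_pow_PP: "distinct (snd cu) \<Longrightarrow>
   (ederiv a ^^ h) (PP cu) = PP ((st a ^^ h) cu) \<and> distinct (snd ((st a ^^ h) cu))"
  by (induction h) (auto simp: ederiv_PP distinct_st)

lemma Dop_PP: "distinct (snd cu) \<Longrightarrow> Dop h k l j (PP cu) = PP (Dw h k l j cu)"
  unfolding Dop_def Dw_def using ederiv_pow_PP by metis

lemma rm_map: "inj f \<Longrightarrow> rm (f a) (map f u) = (fst (rm a u), map f (snd (rm a u)))"
  by (induction u) (auto simp: inj_eq)

lemma st_map: "inj f \<Longrightarrow> st (f a) (apsnd (map f) cu) = apsnd (map f) (st a cu)"
  by (simp add: st_def rm_map)

lemma st_pow_map: "inj f \<Longrightarrow> (st (f a) ^^ h) (apsnd (map f) cu) = apsnd (map f) ((st a ^^ h) cu)"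
  by (induction h) (auto simp: st_map)

lemma inj_gact: "inj \<sigma> \<Longrightarrow> inj (gact \<sigma>)"
  by (auto simp: inj_def gact_def prod_eq_iff)

lemma Dw_act: "inj \<sigma> \<Longrightarrow> Dw h k l (\<sigma> j) (apsnd (act \<sigma>) cu) = apsnd (act \<sigma>) (Dw h k l j cu)"
proof -
  assume i: "inj \<sigma>"
  have e: "th (\<sigma> j) = gact \<sigma> (th j)" "xi (\<sigma> j) = gact \<sigma> (xi j)" "rh (\<sigma> j) = gact \<sigma> (rh j)"
    by (simp_all add: th_def xi_def rh_def gact_def)
  have a: "act \<sigma> = map (gact \<sigma>)" by (rule ext) (simp add: act_def)
  show ?thesis unfolding Dw_def e a using st_pow_map[OF inj_gact[OF i]] by simp
qed

lemma Dop_lin: "Dop h k l j (\<lambda>S. \<Sum>x\<in>A. c x * F x S) = (\<lambda>S. \<Sum>x\<in>A. c x * Dop h k l j (F x) S)"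
  by (simp add: Dop_def ederiv_pow_lin)

lemma Dop_add: "Dop h k l j (\<lambda>S. f S + g S) = (\<lambda>S. Dop h k l j f S + Dop h k l j g S)"
  by (simp add: Dop_def ederiv_pow_add)

lemma P_PP: "P v = PP (1, v)" by (simp add: PP_def)

lemma distinct_act: "inj \<sigma> \<Longrightarrow> distinct (act \<sigma> u) = distinct u"
  by (simp add: act_def distinct_map inj_on_subset[OF inj_gact] subset_UNIV)

lemma HARM:
  assumes d: "distinct u"
  shows "esum (\<lambda>i. Dop h k l i (Alt n u)) {1..n} =
     (\<lambda>S. \<Sum>j\<in>{1..n}. fst (Dw h k l j (1, u)) * Alt n (snd (Dw h k l j (1, u))) S)"
proof (rule ext)
  fix S
  let ?G = "{\<sigma>. \<sigma> permutes {1..n::nat}}"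
  have "esum (\<lambda>i. Dop h k l i (Alt n u)) {1..n} S =
     (\<Sum>i\<in>{1..n}. \<Sum>\<sigma>\<in>?G. of_int (sign \<sigma>) * Dop h k l i (P (act \<sigma> u)) S)"
    by (simp add: esum_def Alt_def Dop_lin)
  also have "\<dots> = (\<Sum>\<sigma>\<in>?G. \<Sum>i\<in>{1..n}. of_int (sign \<sigma>) * Dop h k l i (P (act \<sigma> u)) S)"
    by (rule sum.swap)
  also have "\<dots> = (\<Sum>\<sigma>\<in>?G. \<Sum>j\<in>{1..n}. of_int (sign \<sigma>) *
       (fst (Dw h k l j (1, u)) * P (act \<sigma> (snd (Dw h k l j (1, u)))) S))"
  proof (rule sum.cong[OF refl])
    fix \<sigma> assume "\<sigma> \<in> ?G"
    then have p: "\<sigma> permutes {1..n}" by simp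
    have inj: "inj \<sigma>" using p by (rule permutes_inj)
    have "(\<Sum>i\<in>{1..n}. of_int (sign \<sigma>) * Dop h k l i (P (act \<sigma> u)) S) =
          (\<Sum>j\<in>{1..n}. of_int (sign \<sigma>) * Dop h k l (\<sigma> j) (P (act \<sigma> u)) S)"
      by (rule sum.reindex_bij_betw[symmetric]) (rule permutes_imp_bij[OF p])
    also have "\<dots> = (\<Sum>j\<in>{1..n}. of_int (sign \<sigma>) *
       (fst (Dw h k l j (1, u)) * P (act \<sigma> (snd (Dw h k l j (1, u)))) S))"
    proof (rule sum.cong[OF refl])
      fix j
      have "P (act \<sigma> u) = PP (apsnd (act \<sigma>) (1, u))" by (simp add: PP_def)
      then have "Dop h k l (\<sigma> j) (P (act \<sigma> u)) = PP (Dw h k l (\<sigma> j) (apsnd (act \<sigma>) (1, u)))"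
        using Dop_PP distinct_act[OF inj] d by simp
      also have "\<dots> = PP (apsnd (act \<sigma>) (Dw h k l j (1, u)))" by (simp only: Dw_act[OF inj])
      finally show "of_int (sign \<sigma>) * Dop h k l (\<sigma> j) (P (act \<sigma> u)) S = of_int (sign \<sigma>) *
       (fst (Dw h k l j (1, u)) * P (act \<sigma> (snd (Dw h k l j (1, u)))) S)"
        by (simp add: PP_def apsnd_def map_prod_def split_beta)
    qed
    finally show "(\<Sum>i\<in>{1..n}. of_int (sign \<sigma>) * Dop h k l i (P (act \<sigma> u)) S) =
        (\<Sum>j\<in>{1..n}. of_int (sign \<sigma>) *
       (fst (Dw h k l j (1, u)) * P (act \<sigma> (snd (Dw h k l j (1, u)))) S))" .
  qed
  also have "\<dots> = (\<Sum>j\<in>{1..n}. \<Sum>\<sigma>\<in>?G. of_int (sign \<sigma>) *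
       (fst (Dw h k l j (1, u)) * P (act \<sigma> (snd (Dw h k l j (1, u)))) S))"
    by (rule sum.swap)
  also have "\<dots> = (\<Sum>j\<in>{1..n}. fst (Dw h k l j (1, u)) * Alt n (snd (Dw h k l j (1, u))) S)"
    by (simp add: Alt_def sum_distrib_left mult_ac)
  finally show "esum (\<lambda>i. Dop h k l i (Alt n u)) {1..n} S =
     (\<Sum>j\<in>{1..n}. fst (Dw h k l j (1, u)) * Alt n (snd (Dw h k l j (1, u))) S)" .
qed

lemma act_comp: "act (\<sigma> \<circ> \<tau>) u = act \<sigma> (act \<tau> u)"
  by (simp add: act_def gact_def)

lemma Alt_swap:
  assumes x: "x \<in> {1..n}" and y: "y \<in> {1..n}" and xy: "x \<noteq> y"
  shows "Alt n (act (transpose x y) u) = (\<lambda>S. - Alt n u S)"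
proof (rule ext)
  fix S
  let ?t = "transpose x y"
  let ?G = "{\<sigma>. \<sigma> permutes {1..n::nat}}"
  have tp: "?t permutes {1..n}" using x y by (rule permutes_swap_id)
  have "Alt n u S = (\<Sum>\<sigma>\<in>?G. of_int (sign (\<sigma> \<circ> ?t)) * P (act (\<sigma> \<circ> ?t) u) S)"
    unfolding Alt_def by (rule sum_permutations_compose_right[OF tp])
  also have "\<dots> = (\<Sum>\<sigma>\<in>?G. - (of_int (sign \<sigma>) * P (act \<sigma> (act ?t u)) S))"
  proof (rule sum.cong[OF refl])
    fix \<sigma> assume "\<sigma> \<in> ?G"
    then have "permutation \<sigma>" by (auto intro: permutes_imp_permutation[OF finite_atLeastAtMost])
    moreover have "permutation ?t" using tp by (auto intro: permutes_imp_permutation[OF finite_atLeastAtMost])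
    ultimately have "sign (\<sigma> \<circ> ?t) = - sign \<sigma>" using xy by (simp add: sign_compose sign_swap_id)
    then show "of_int (sign (\<sigma> \<circ> ?t)) * P (act (\<sigma> \<circ> ?t) u) S = - (of_int (sign \<sigma>) * P (act \<sigma> (act ?t u)) S)"
      by (simp add: act_comp)
  qed
  also have "\<dots> = - Alt n (act ?t u) S" by (simp add: Alt_def sum_negf)
  finally show "Alt n (act ?t u) S = - Alt n u S" by simp
qed

lemma act_fix: "(\<And>p. p \<in> set u \<Longrightarrow> snd p \<noteq> x \<and> snd p \<noteq> y) \<Longrightarrow> act (transpose x y) u = u"
  by (auto simp: act_def gact_def intro!: map_idI)

lemma Alt_zero:
  assumes x: "x \<in> {1..n}" and y: "y \<in> {1..n}" and xy: "x \<noteq> y"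
    and u: "\<And>p. p \<in> set u \<Longrightarrow> snd p \<noteq> x \<and> snd p \<noteq> y"
  shows "Alt n u = (\<lambda>S. 0)"
proof (rule ext)
  fix S
  have "Alt n u S = - Alt n u S" using Alt_swap[OF x y xy, of u] act_fix[OF u] by metis
  then show "Alt n u S = 0" by simp
qed

definition w1 :: "nat \<Rightarrow> gen list" where "w1 n = map th [1..<n]"
definition Th :: "nat \<Rightarrow> gen list" where "Th n = map th [3..<n]"

lemma gen_simps [simp]:
  "th i = th j \<longleftrightarrow> i = j" "xi i = xi j \<longleftrightarrow> i = j" "rh i = rh j \<longleftrightarrow> i = j"
  "th i \<noteq> xi j" "th i \<noteq> rh j" "xi i \<noteq> rh j" "xi i \<noteq> th j" "rh i \<noteq> th j" "rh i \<noteq> xi j"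
  "snd (th i) = i" "snd (xi i) = i" "snd (rh i) = i"
  by (auto simp: th_def xi_def rh_def)

lemma gact_simps [simp]: "gact \<sigma> (th i) = th (\<sigma> i)" "gact \<sigma> (xi i) = xi (\<sigma> i)" "gact \<sigma> (rh i) = rh (\<sigma> i)"
  by (auto simp: th_def xi_def rh_def gact_def)

lemma set_Th: "p \<in> set (Th n) \<longleftrightarrow> (\<exists>i. 3 \<le> i \<and> i < n \<and> p = th i)"
  by (auto simp: Th_def)

lemma Th_notin [simp]: "xi i \<notin> set (Th n)" "rh i \<notin> set (Th n)" "th 1 \<notin> set (Th n)" "th 2 \<notin> set (Th n)"
  by (auto simp: set_Th)

lemma rm_Th [simp]: "rm (xi i) (Th n) = (0, Th n)" "rm (rh i) (Th n) = (0, Th n)"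
   "rm (th 1) (Th n) = (0, Th n)" "rm (th 2) (Th n) = (0, Th n)"
  by (rule rm_notin; simp add: set_Th)+

lemma act_Th12: "act (transpose 1 2) (Th n) = Th n"
  by (rule act_fix) (auto simp: set_Th)

lemma act_Th [simp]: "act \<sigma> (Th n) = map (\<lambda>i. th (\<sigma> i)) [3..<n]"
  by (simp add: act_def Th_def)

lemma distinct_Th: "distinct (Th n)"
  by (simp add: Th_def distinct_map inj_on_def)

lemma Alt_pair: "n \<ge> 3 \<Longrightarrow> Alt n ((s,1) # (t,2) # Th n) S = - Alt n ((s,2) # (t,1) # Th n) S"
proof -
  assume n: "n \<ge> 3"
  have "act (transpose 1 2) ((s,2) # (t,1) # Th n) = (s,1) # (t,2) # Th n"
    using act_Th12[of n] by (simp add: act_def gact_def)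
  moreover have "Alt n (act (transpose 1 2) ((s,2) # (t,1) # Th n)) S = - Alt n ((s,2) # (t,1) # Th n) S"
    using Alt_swap[of 1 n 2 "(s,2) # (t,1) # Th n"] n by simp
  ultimately show ?thesis by simp
qed

lemma funpow_one [simp]: "(f::'a \<Rightarrow> 'a) ^^ 1 = f" by simp

lemma ZT:
  assumes d: "distinct u" and idx: "\<And>p. p \<in> set u \<Longrightarrow> 1 \<le> snd p \<and> snd p < n"
    and only: "\<And>p. p \<in> set u \<Longrightarrow> snd p = j \<Longrightarrow> p = th j" and j: "j \<in> {1..n}"
  shows "fst (rm (th j) u) * Alt n (remove1 (th j) u) S = 0"
proof (cases "th j \<in> set u")
  case False
  then show ?thesis by (simp add: rm_notin)
next
  case True
  then have jn: "j < n" using idx[of "th j"] by simp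
  have z: "Alt n (remove1 (th j) u) = (\<lambda>S. 0)"
  proof (rule Alt_zero[of j n n])
    fix p assume "p \<in> set (remove1 (th j) u)"
    then have pu: "p \<in> set u" and pj: "p \<noteq> th j" using d by (auto simp: set_remove1_eq)
    have "snd p \<noteq> j" using only[OF pu] pj by blast
    moreover have "snd p < n" using idx[OF pu] by simp
    ultimately show "snd p \<noteq> j \<and> snd p \<noteq> n" by simp
  qed (use j jn in auto)
  then show ?thesis by simp
qed

lemma Delta1_Alt: "Delta1 n = Alt n (w1 n)"
  unfolding Delta1_def Alt_def esum_def esmult_def w1_def P_def act_def
  by (simp add: o_def)

lemma emul_eone_P: "emul eone (P v) = P v"
  by (rule emul_eone) (simp add: P_infinite)

lemma emul3: "emul (eprod [evar a, evar b, evar c]) (P v) = P (a # b # c # v)"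
  by (simp add: eprod_def emul_assoc_evar emul_eone_P P_Cons)

lemma emul_add: "emul (eadd f g) h = eadd (emul f h) (emul g h)"
  by (rule ext) (simp add: emul_def eadd_def sum.distrib ring_distribs)

definition wa :: "nat \<Rightarrow> gen list" where "wa n = th 1 # xi 2 # rh 2 # Th n"
definition wb :: "nat \<Rightarrow> gen list" where "wb n = th 2 # xi 1 # rh 2 # Th n"
definition wc :: "nat \<Rightarrow> gen list" where "wc n = th 2 # xi 2 # rh 1 # Th n"

lemma Delta2_Alt: "Delta2 n = (\<lambda>S. Alt n (wa n) S + Alt n (wb n) S + Alt n (wc n) S)"
proof -
  have e: "eprod (map (\<lambda>i. evar (th (\<sigma> i))) [3..<n]) = P (act \<sigma> (Th n))" for \<sigma>
    by (simp add: P_def o_def)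
  have t: "emul (eadd (eadd (eprod [evar (th (\<sigma> 1)), evar (xi (\<sigma> 2)), evar (rh (\<sigma> 2))])
                     (eprod [evar (th (\<sigma> 2)), evar (xi (\<sigma> 1)), evar (rh (\<sigma> 2))]))
                     (eprod [evar (th (\<sigma> 2)), evar (xi (\<sigma> 2)), evar (rh (\<sigma> 1))]))
         (P (act \<sigma> (Th n))) = (\<lambda>S. P (act \<sigma> (wa n)) S + P (act \<sigma> (wb n)) S + P (act \<sigma> (wc n)) S)" for \<sigma>
    unfolding emul_add emul3 by (simp add: eadd_def act_def wa_def wb_def wc_def)
  show ?thesis
    unfolding Delta2_def e t
    by (rule ext) (simp add: esum_def esmult_def Alt_def sum.distrib ring_distribs)
qed

lemma gens_iff: "p \<in> gens n \<longleftrightarrow> (\<exists>i\<in>{1..n}. p = th i \<or> p = xi i \<or> p = rh i)"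
  by (auto simp: gens_def)

lemma gact_gens: "\<sigma> permutes {1..n} \<Longrightarrow> p \<in> gens n \<Longrightarrow> gact \<sigma> p \<in> gens n"
  unfolding gens_iff using permutes_in_image by fastforce

lemma Alt_in_alg: "set u \<subseteq> gens n \<Longrightarrow> in_alg n (Alt n u)"
  unfolding in_alg_def
proof (intro allI impI)
  fix S assume u: "set u \<subseteq> gens n" and ne: "Alt n u S \<noteq> 0"
  then obtain \<sigma> where s: "\<sigma> permutes {1..n}" and "of_int (sign \<sigma>) * P (act \<sigma> u) S \<noteq> 0"
    unfolding Alt_def using sum.not_neutral_contains_not_neutral by force
  then have "P (act \<sigma> u) S \<noteq> 0" by simp
  then have "S = set (act \<sigma> u)" by (rule P_supp)
  then show "S \<subseteq> gens n" using u gact_gens[OF s] by (auto simp: act_def)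
qed

lemma in_alg_add3: "in_alg n f \<Longrightarrow> in_alg n g \<Longrightarrow> in_alg n h \<Longrightarrow> in_alg n (\<lambda>S. f S + g S + h S)"
  unfolding in_alg_def by (metis add.right_neutral)

lemma harm_reduce:
  assumes "\<And>h k l. h \<le> 1 \<Longrightarrow> k \<le> 1 \<Longrightarrow> l \<le> 1 \<Longrightarrow> h + k + l > 0 \<Longrightarrow>
      esum (\<lambda>i. Dop h k l i F) {1..n} = ezero"
  shows "\<forall>h k l. h + k + l > 0 \<longrightarrow>
        esum (\<lambda>i. (ederiv (th i) ^^ h) ((ederiv (xi i) ^^ k) ((ederiv (rh i) ^^ l) F))) {1..n} = ezero"
proof (intro allI impI)
  fix h k l :: nat assume pos: "h + k + l > 0"
  show "esum (\<lambda>i. (ederiv (th i) ^^ h) ((ederiv (xi i) ^^ k) ((ederiv (rh i) ^^ l) F))) {1..n} = ezero"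
  proof (cases "h \<le> 1 \<and> k \<le> 1 \<and> l \<le> 1")
    case True
    then show ?thesis using assms[of h k l] pos by (simp add: Dop_def)
  next
    case False
    then have "(\<lambda>i. (ederiv (th i) ^^ h) ((ederiv (xi i) ^^ k) ((ederiv (rh i) ^^ l) F))) = (\<lambda>i. (\<lambda>_. 0))"
      by (auto simp: ederiv_pow_ge2 ederiv_pow_zero)
    then show ?thesis by (simp add: esum_def ezero_def)
  qed
qed

lemma set_w1: "p \<in> set (w1 n) \<longleftrightarrow> (\<exists>i. 1 \<le> i \<and> i < n \<and> p = th i)"
  by (auto simp: w1_def)

lemma distinct_w1: "distinct (w1 n)"
  by (simp add: w1_def distinct_map inj_on_def)

lemma Delta1_harm:
  assumes hkl: "h \<le> 1" "k \<le> 1" "l \<le> 1" "h + k + l > 0"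
  shows "esum (\<lambda>i. Dop h k l i (Alt n (w1 n))) {1..n} = ezero"
proof -
  have T: "fst (Dw h k l j (1, w1 n)) * Alt n (snd (Dw h k l j (1, w1 n))) S = 0" if j: "j \<in> {1..n}" for j S
  proof -
    have rx: "rm (xi j) (w1 n) = (0, w1 n)" "rm (rh j) (w1 n) = (0, w1 n)"
      by (rule rm_notin; simp add: set_w1)+
    have z: "fst (rm (th j) (w1 n)) * Alt n (remove1 (th j) (w1 n)) S = 0"
      by (rule ZT[OF distinct_w1 _ _ j]) (auto simp: set_w1)
    have "h = 0 \<or> h = 1" "k = 0 \<or> k = 1" "l = 0 \<or> l = 1" using hkl by auto
    then show ?thesis using hkl(4) z rx
      by (auto simp: Dw_def st_def snd_rm)
  qed
  show ?thesis unfolding HARM[OF distinct_w1] by (rule ext) (simp add: T ezero_def)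
qed


lemma Tzero:
  assumes hkl: "h \<le> 1" "k \<le> 1" "l \<le> 1" "h + k + l > 0"
    and d: "distinct u" and idx: "\<And>p. p \<in> set u \<Longrightarrow> 1 \<le> snd p \<and> snd p < n"
    and only: "\<And>p. p \<in> set u \<Longrightarrow> snd p = j \<Longrightarrow> p = th j" and j: "j \<in> {1..n}"
  shows "fst (Dw h k l j (1, u)) * Alt n (snd (Dw h k l j (1, u))) S = 0"
proof -
  have rx1: "rm (xi j) u = (0, u)"
  proof (rule rm_notin)
    show "xi j \<notin> set u" using only[of "xi j"] by auto
  qed
  have rx2: "rm (rh j) u = (0, u)"
  proof (rule rm_notin)
    show "rh j \<notin> set u" using only[of "rh j"] by auto
  qed
  note rx = rx1 rx2
  have z: "fst (rm (th j) u) * Alt n (remove1 (th j) u) S = 0"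
    by (rule ZT[OF d idx only j])
  have "h = 0 \<or> h = 1" "k = 0 \<or> k = 1" "l = 0 \<or> l = 1" using hkl by auto
  then show ?thesis using hkl(4) z rx
    by (auto simp: Dw_def st_def snd_rm)
qed

lemma AZ2:
  assumes a: "n \<ge> 3" "snd p = 2" "snd q = 2" shows "Alt n (p # q # Th n) S = 0"
proof -
  have "Alt n (p # q # Th n) = (\<lambda>S. 0)"
    by (rule Alt_zero[of 1 n n]) (use a in \<open>auto simp: set_Th\<close>)
  then show ?thesis by simp
qed

lemma AZ1:
  assumes a: "n \<ge> 3" "snd p = 1" shows "Alt n (p # Th n) S = 0"
proof -
  have "Alt n (p # Th n) = (\<lambda>S. 0)"
    by (rule Alt_zero[of 2 n n]) (use a in \<open>auto simp: set_Th\<close>)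
  then show ?thesis by simp
qed

lemma AP1: "n \<ge> 3 \<Longrightarrow> Alt n (xi 1 # rh 2 # Th n) S = - Alt n (xi 2 # rh 1 # Th n) S"
  using Alt_pair[of n 1 2] by (simp add: xi_def rh_def)
lemma AP2: "n \<ge> 3 \<Longrightarrow> Alt n (th 1 # rh 2 # Th n) S = - Alt n (th 2 # rh 1 # Th n) S"
  using Alt_pair[of n 0 2] by (simp add: th_def rh_def)
lemma AP3: "n \<ge> 3 \<Longrightarrow> Alt n (th 1 # xi 2 # Th n) S = - Alt n (th 2 # xi 1 # Th n) S"
  using Alt_pair[of n 0 1] by (simp add: th_def xi_def)

lemma AP1': "n \<ge> 3 \<Longrightarrow> Alt n (xi (Suc 0) # rh 2 # Th n) S = - Alt n (xi 2 # rh (Suc 0) # Th n) S"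
  by (metis AP1 One_nat_def)
lemma AP2': "n \<ge> 3 \<Longrightarrow> Alt n (th (Suc 0) # rh 2 # Th n) S = - Alt n (th 2 # rh (Suc 0) # Th n) S"
  by (metis AP2 One_nat_def)
lemma AP3': "n \<ge> 3 \<Longrightarrow> Alt n (th (Suc 0) # xi 2 # Th n) S = - Alt n (th 2 # xi (Suc 0) # Th n) S"
  by (metis AP3 One_nat_def)
lemma rm_Th1': "rm (th (Suc 0)) (Th n) = (0, Th n)"
  by (metis rm_Th(3) One_nat_def)

lemma words_props:
  assumes n: "n \<ge> 3" and u: "u \<in> {wa n, wb n, wc n}"
  shows "distinct u" "\<And>p. p \<in> set u \<Longrightarrow> 1 \<le> snd p \<and> snd p < n"
    "\<And>p j. p \<in> set u \<Longrightarrow> snd p = j \<Longrightarrow> j \<ge> 3 \<Longrightarrow> p = th j"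
  using u n distinct_Th by (auto simp: wa_def wb_def wc_def set_Th th_def xi_def rh_def)

lemma Delta2_harm:
  assumes n: "n \<ge> 3" and hkl: "h \<le> 1" "k \<le> 1" "l \<le> 1" "h + k + l > 0"
  shows "esum (\<lambda>i. Dop h k l i (\<lambda>S. Alt n (wa n) S + Alt n (wb n) S + Alt n (wc n) S)) {1..n} = ezero"
proof -
  let ?T = "\<lambda>u j S. fst (Dw h k l j (1, u)) * Alt n (snd (Dw h k l j (1, u))) S"
  have dA: "distinct (wa n)" "distinct (wb n)" "distinct (wc n)" using words_props(1)[OF n] by auto
  have "esum (\<lambda>i. Dop h k l i (\<lambda>S. Alt n (wa n) S + Alt n (wb n) S + Alt n (wc n) S)) {1..n} =
    (\<lambda>S. esum (\<lambda>i. Dop h k l i (Alt n (wa n))) {1..n} S + esum (\<lambda>i. Dop h k l i (Alt n (wb n))) {1..n} S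
       + esum (\<lambda>i. Dop h k l i (Alt n (wc n))) {1..n} S)"
    by (simp add: Dop_add esum_def sum.distrib)
  also have "\<dots> = (\<lambda>S. \<Sum>j\<in>{1..n}. ?T (wa n) j S + ?T (wb n) j S + ?T (wc n) j S)"
    unfolding HARM[OF dA(1)] HARM[OF dA(2)] HARM[OF dA(3)] by (simp add: sum.distrib)
  also have "\<dots> = (\<lambda>S. 0)"
  proof (rule ext)
    fix S
    have z3: "?T u j S = 0" if u: "u \<in> {wa n, wb n, wc n}" and j: "j \<in> {3..n}" for u j
      by (rule Tzero[OF hkl words_props(1)[OF n u] words_props(2)[OF n u]])
         (use words_props(3)[OF n u] j in auto)
    have eq: "{1..n} = insert 1 (insert 2 {3..n})" using n by auto
    have "(\<Sum>j\<in>{1..n}. ?T (wa n) j S + ?T (wb n) j S + ?T (wc n) j S) =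
       (?T (wa n) 1 S + ?T (wb n) 1 S + ?T (wc n) 1 S) + (?T (wa n) 2 S + ?T (wb n) 2 S + ?T (wc n) 2 S)
       + (\<Sum>j\<in>{3..n}. ?T (wa n) j S + ?T (wb n) j S + ?T (wc n) j S)"
      unfolding eq by simp
    also have "(\<Sum>j\<in>{3..n}. ?T (wa n) j S + ?T (wb n) j S + ?T (wc n) j S) = 0"
      by (rule sum.neutral) (simp add: z3)
    also have "(?T (wa n) 1 S + ?T (wb n) 1 S + ?T (wc n) 1 S) + (?T (wa n) 2 S + ?T (wb n) 2 S + ?T (wc n) 2 S) = 0"
    proof -
      have "h = 0 \<or> h = 1" "k = 0 \<or> k = 1" "l = 0 \<or> l = 1" using hkl by auto
      then show ?thesis using hkl(4) n
        by (auto simp: Dw_def st_def wa_def wb_def wc_def AZ1 AZ2 AP1 AP2 AP3 AP1' AP2' AP3' rm_Th1')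
    qed
    finally show "(\<Sum>j\<in>{1..n}. ?T (wa n) j S + ?T (wb n) j S + ?T (wc n) j S) = 0" by simp
  qed
  finally show ?thesis by (simp add: ezero_def)
qed

theorem proposition4p4:
  shows "(\<forall>n::nat. n \<ge> 1 \<longrightarrow> Delta1 n \<in> triag_harm n)
       \<and> (\<forall>n::nat. n \<ge> 3 \<longrightarrow> Delta2 n \<in> triag_harm n)"
proof (intro conjI allI impI)
  fix n :: nat assume "n \<ge> 1"
  have ia: "in_alg n (Alt n (w1 n))"
    by (rule Alt_in_alg) (auto simp: set_w1 gens_iff)
  show "Delta1 n \<in> triag_harm n"
    unfolding triag_harm_def Delta1_Alt mem_Collect_eq by (rule conjI[OF ia harm_reduce[OF Delta1_harm]])
next
  fix n :: nat assume n: "n \<ge> 3"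
  have ia: "in_alg n (\<lambda>S. Alt n (wa n) S + Alt n (wb n) S + Alt n (wc n) S)"
    by (intro in_alg_add3 Alt_in_alg) (use n in \<open>auto simp: wa_def wb_def wc_def set_Th gens_iff\<close>)
  show "Delta2 n \<in> triag_harm n"
    unfolding triag_harm_def Delta2_Alt mem_Collect_eq by (rule conjI[OF ia harm_reduce[OF Delta2_harm[OF n]]])
qed

end
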